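(* For every integer $d\ge 0$ and every line segment $s$ with $\operatorname{height}(s)=1$ and $\operatorname{width}(s)\le 1$, there exists a $d$-dimensional box type $T$ that contains $s$ when $s$ is translated so that its lower endpoint coincides with the midpoint of the bottom edge of $T$.
   Context: For a compact set $S\subset\mathbb R^2$, $\operatorname{width}(S)=\max_{p,q\in S}|x(p)-x(q)|$ and $\operatorname{height}(S)=\max_{p,q\in S}|y(p)-y(q)|$. A horizontal parallelogram is one with a pair of horizontal edges (its bottom and top edges). Box types: the $0$-dimensional (basic) box type $[\,]$ is a $2\times 1$ axis-parallel rectangle. Given a $d$-dimensional box type $T=[x_1,\dots,x_d]\in\{-1,0,+1\}^d$, which is a horizontal parallelogram of height $1$ with bottom edge $b$ and top edge $t$, partition $b$ into three equally long segments $b_{-1},b_0,b_{+1}$ (from left to right) and likewise $t$ into $t_{-1},t_0,t_{+1}$; for $x_{d+1}\in\{-1,0,+1\}$ the $(d+1)$-dimensional box type $T\oplus[x_{d+1}]=[x_1,\dots,x_{d+1}]$ is the parallelogram with bottom edge $b_0$ and top edge $t_{x_{d+1}}$. (Thus all box types obtained from a fixed basic rectangle share the midpoint of their bottom edges.) *)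

theory Defs
  imports "HOL-Analysis.Analysis"
begin

definition width :: "(real \<times> real) set \<Rightarrow> real" where
  "width S = Sup {\<bar>fst p - fst q\<bar> | p q. p \<in> S \<and> q \<in> S}"

definition height :: "(real \<times> real) set \<Rightarrow> real" where
  "height S = Sup {\<bar>snd p - snd q\<bar> | p q. p \<in> S \<and> q \<in> S}"

text \<open>A horizontal parallelogram of height 1 with bottom edge on y = 0 and top edge on y = 1
  is encoded by the x-coordinates (bottom-left, bottom-right, top-left, top-right).\<close>
type_synonym hpar = "real \<times> real \<times> real \<times> real"

definition hpar_set :: "hpar \<Rightarrow> (real \<times> real) set" where
  "hpar_set P = (case P of (bl, br, tlx, trx) \<Rightarrow>
     convex hull {(bl, 0), (br, 0), (trx, 1), (tlx, 1)})"

definition bottom_mid :: "hpar \<Rightarrow> real \<times> real" where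
  "bottom_mid P = (case P of (bl, br, tlx, trx) \<Rightarrow> ((bl + br) / 2, 0))"

definition basic_box :: hpar where
  "basic_box = (-1, 1, -1, 1)"

text \<open>Refinement step T \<oplus> [x]: bottom edge becomes the middle third b_0 of the bottom edge,
  top edge becomes the third t_x of the top edge (x = -1 left, 0 middle, +1 right).\<close>
definition refine :: "hpar \<Rightarrow> int \<Rightarrow> hpar" where
  "refine P x = (case P of (bl, br, tlx, trx) \<Rightarrow>
     (let lb = (br - bl) / 3; lt = (trx - tlx) / 3 in
       (bl + lb, bl + 2 * lb, tlx + real_of_int (x + 1) * lt, tlx + real_of_int (x + 2) * lt)))"

definition box_type :: "int list \<Rightarrow> hpar" where
  "box_type xs = foldl refine basic_box xs"

end

theory Submission
  imports Defs
begin

lemma box_snoc: "box_type (xs @ [x]) = refine (box_type xs) x"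
  by (simp add: box_type_def)

lemma reach:
  fixes a :: real
  assumes "-1 \<le> a" "a \<le> 1"
  shows "\<exists>xs. length xs = d \<and> set xs \<subseteq> {-1,0,1} \<and>
    (\<exists>tL tR. box_type xs = (-1/3^d, 1/3^d, tL, tR) \<and> tL \<le> a \<and> a \<le> tR \<and> tR - tL = 2/3^d)"
proof (induction d)
  case 0
  show ?case using assms by (intro exI[of _ "[]"]) (simp add: box_type_def basic_box_def)
next
  case (Suc d)
  then obtain xs tL tR where xs: "length xs = d" "set xs \<subseteq> {-1,0,1}"
    and bt: "box_type xs = (-1/3^d, 1/3^d, tL, tR)" "tL \<le> a" "a \<le> tR" "tR - tL = 2/3^d"
    by blast
  define L where "L = (tR - tL) / 3"
  define x :: int where "x = (if a \<le> tL + L then -1 else if a \<le> tL + 2*L then 0 else 1)"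
  have x: "x \<in> {-1,0,1}" unfolding x_def by auto
  have bt2: "box_type (xs @ [x]) = (-1/3^Suc d, 1/3^Suc d, tL + real_of_int (x+1) * L,
       tL + real_of_int (x+2) * L)"
    unfolding box_snoc bt(1) refine_def L_def Let_def by (simp add: field_simps)
  have L: "L = 2 / 3^Suc d" unfolding L_def using bt(4) by simp
  show ?case
  proof (intro exI conjI)
    show "length (xs @ [x]) = Suc d" using xs by simp
    show "set (xs @ [x]) \<subseteq> {-1,0,1}" using xs x by auto
    show "box_type (xs @ [x]) = (-1/3^Suc d, 1/3^Suc d, tL + real_of_int (x+1) * L,
       tL + real_of_int (x+2) * L)" by (rule bt2)
    show "tL + real_of_int (x+1) * L \<le> a" "a \<le> tL + real_of_int (x+2) * L"
      using bt unfolding x_def L_def by auto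
    show "tL + real_of_int (x+2) * L - (tL + real_of_int (x+1) * L) = 2 / 3 ^ Suc d"
    proof -
      have "tL + real_of_int (x+2) * L - (tL + real_of_int (x+1) * L) = L"
        by (simp add: algebra_simps)
      then show ?thesis using L by simp
    qed
  qed
qed

lemma seg_bound:
  fixes p q u v :: "real \<times> real"
  assumes "u \<in> closed_segment p q" "v \<in> closed_segment p q"
  shows "\<bar>fst u - fst v\<bar> \<le> \<bar>fst p - fst q\<bar> \<and> \<bar>snd u - snd v\<bar> \<le> \<bar>snd p - snd q\<bar>"
proof -
  obtain s where s: "0 \<le> s" "s \<le> 1" "u = (1 - s) *\<^sub>R p + s *\<^sub>R q"
    using assms(1) unfolding closed_segment_def by auto
  obtain t where t: "0 \<le> t" "t \<le> 1" "v = (1 - t) *\<^sub>R p + t *\<^sub>R q"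
    using assms(2) unfolding closed_segment_def by auto
  have e1: "fst u - fst v = (t - s) * (fst p - fst q)" unfolding s(3) t(3) by (simp add: algebra_simps)
  have e2: "snd u - snd v = (t - s) * (snd p - snd q)" unfolding s(3) t(3) by (simp add: algebra_simps)
  have "\<bar>t - s\<bar> \<le> 1" using s t by auto
  then show ?thesis unfolding e1 e2 abs_mult
    by (simp add: mult_left_le_one_le)
qed

lemma width_seg: "width (closed_segment p q) = \<bar>fst p - fst q\<bar>"
  unfolding width_def
  by (rule cSup_eq_maximum) (use seg_bound in blast)+

lemma height_seg: "height (closed_segment p q) = \<bar>snd p - snd q\<bar>"
  unfolding height_def
  by (rule cSup_eq_maximum) (use seg_bound in blast)+

lemma horiz_in_seg:
  fixes bl br m y :: real
  assumes "bl \<le> m" "m \<le> br" "bl < br"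
  shows "(m, y) \<in> closed_segment (bl, y) (br, y)"
proof -
  define u where "u = (m - bl) / (br - bl)"
  have "0 \<le> u" "u \<le> 1" using assms unfolding u_def by (auto simp: field_simps)
  moreover have "(1 - u) * bl + u * br = m"
  proof -
    have "u * (br - bl) = m - bl" unfolding u_def using assms by simp
    moreover have "(1-u)*bl + u*br = bl + u*(br-bl)" by (simp add: algebra_simps)
    ultimately show ?thesis by simp
  qed
  moreover have "(1 - u) * y + u * y = y" by (simp add: algebra_simps)
  ultimately have "(m, y) = (1 - u) *\<^sub>R (bl, y) + u *\<^sub>R (br, y)"
    by (simp add: prod_eq_iff)
  moreover note \<open>0 \<le> u\<close> \<open>u \<le> 1\<close>
  ultimately show ?thesis unfolding closed_segment_def by blast
qed

theorem lemma14:
  fixes d :: nat and p q :: "real \<times> real"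
  assumes "snd p \<le> snd q"
    and "height (closed_segment p q) = 1"
    and "width (closed_segment p q) \<le> 1"
  shows "\<exists>xs. length xs = d \<and> set xs \<subseteq> {-1, 0, 1} \<and>
           (\<lambda>z. z + (bottom_mid (box_type xs) - p)) ` closed_segment p q
             \<subseteq> hpar_set (box_type xs)"
proof -
  define a where "a = fst q - fst p"
  have h: "snd q = snd p + 1" using assms(1,2) height_seg[of p q] by auto
  have a: "-1 \<le> a" "a \<le> 1" using assms(3) width_seg[of p q] unfolding a_def by auto
  obtain xs tL tR where xs: "length xs = d" "set xs \<subseteq> {-1,0,1}"
    and bt: "box_type xs = (-1/3^d, 1/3^d, tL, tR)" "tL \<le> a" "a \<le> tR" "tR - tL = 2/3^d"
    using reach[OF a, of d] by blast
  have bm: "bottom_mid (box_type xs) = (0, 0)" unfolding bt(1) bottom_mid_def by simp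
  define H where "H = hpar_set (box_type xs)"
  have H: "H = convex hull {(-1/3^d, 0), (1/3^d, 0), (tR, 1), (tL, 1)}"
    unfolding H_def hpar_set_def bt(1) by simp
  have cH: "convex H" unfolding H by simp
  have pts: "(-1/3^d, 0) \<in> H" "(1/3^d, 0) \<in> H" "(tR, 1) \<in> H" "(tL, 1) \<in> H"
    unfolding H by (auto intro: hull_inc)
  have "closed_segment (-1/3^d, 0) (1/3^d, 0) \<subseteq> H"
    by (rule closed_segment_subset[OF pts(1,2) cH])
  moreover have "((0::real), (0::real)) \<in> closed_segment (-1/3^d, 0) (1/3^d, 0)"
    by (rule horiz_in_seg) auto
  ultimately have P0: "((0::real), (0::real)) \<in> H" by blast
  have "closed_segment (tL, 1) (tR, 1) \<subseteq> H"
    by (rule closed_segment_subset[OF pts(4,3) cH])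
  moreover have "(a, 1::real) \<in> closed_segment (tL, 1) (tR, 1)"
  proof (rule horiz_in_seg[of tL a tR 1])
    have "(0::real) < 2 / 3^d" by simp
    then show "tL < tR" using bt(4) by linarith
  qed (use bt in auto)
  ultimately have P1: "(a, 1) \<in> H" by blast
  have img: "(\<lambda>z. z + (bottom_mid (box_type xs) - p)) ` closed_segment p q
      = closed_segment (0, 0) (a, 1)"
  proof -
    have "(\<lambda>z. z + (bottom_mid (box_type xs) - p)) = (\<lambda>z. (- p) + z)"
      unfolding bm by (auto simp: algebra_simps)
    then have "(\<lambda>z. z + (bottom_mid (box_type xs) - p)) ` closed_segment p q
       = (\<lambda>z. (- p) + z) ` closed_segment p q" by (simp only:)
    also have "\<dots> = closed_segment (-p + p) (-p + q)"
      by (rule closed_segment_translation[symmetric])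
    also have "-p + q = (a, 1)" using h unfolding a_def by (simp add: prod_eq_iff)
    finally show ?thesis by (simp add: zero_prod_def)
  qed
  have "(\<lambda>z. z + (bottom_mid (box_type xs) - p)) ` closed_segment p q \<subseteq> H"
    unfolding img using closed_segment_subset[OF P0 P1 cH] .
  then show ?thesis
    using xs unfolding H_def by blast
qed

end
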